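(* Fix $p\in(0,1/2)$ and $\delta>0$. Let $D_0=D_0(p)$ and $K=K(p)$ be constants with the following property: for all integers $t\ge 2$, all $D\ge D_0$, with $d=D^2t^2$, and every $1\le r\le t$, \[ \mathbb{P}\big(H(r,d,p)\text{ is a clique}\big)\le p^{\binom{r}{2}}\exp\!\left(-\frac{a^3}{p^3\sqrt d}\binom{r}{3}+K\frac{r^3}{D\sqrt d}\right), \] \[ \mathbb{P}\big(H(r,d,p)\text{ is an independent set}\big)\le (1-p)^{\binom{r}{2}}\exp\!\left(\frac{a^3}{(1-p)^3\sqrt d}\binom{r}{3}+K\frac{r^3}{D\sqrt d}\right). \] Fix $D\ge D_0$, and for each $t\ge2$ set $d=D^2t^2$. Define \[ \kappa(p)=\frac{a^3}{6p^3},\qquad \lambda(p)=\frac{a^3}{6(1-p)^3},\qquad m=-\tfrac12\log p+\frac{\kappa(p)}{D}-\frac{K}{D^2}-\delta, \] and $M=\lfloor e^{mt}\rfloor$. Let $H=H(M,d,p)$. Then, as $t\to\infty$, $\mathbb{P}(H\text{ is }K_t\text{-free})=1-o(1)$, and if $v_1,\dots,v_t$ are i.i.d. uniform vertices of $[M]$ (with replacement), independent of $H$, \[ \mathbb{P}\big(\{v_1,\dots,v_t\}\text{ is independent in }H\big)\le \exp\big(-\alpha(p,D)t^2+o(t^2)\big), \] where \[ \alpha(p,D)=\min_{\theta\in[0,1]}\left((1-\theta)\Big(-\tfrac12\log p+\tfrac{\kappa(p)}{D}\Big)-\frac{\theta^2}{2}\log(1-p)-\frac{\lambda(p)}{D}\theta^3-(2-\theta)\frac{K}{D^2}\right)-\delta.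 \] Consequently $c_{t,t}\le \exp(-\alpha(p,D)t^2+o(t^2))$.
   Context: Spherical random geometric graph $H(M,d,p)$: for integers $M,d\ge1$ and $p\in(0,1/2)$, let $u_1,\dots,u_M$ be i.i.d. uniform points on the unit sphere $S^{d-1}\subset\mathbb{R}^d$, let $\tau=\tau(d,p)$ be the unique real number with $\mathbb{P}(\langle u,u'\rangle<\tau)=p$ for independent uniform $u,u'$ on $S^{d-1}$, and let $H(M,d,p)$ be the graph on vertex set $[M]$ with $ij$ an edge iff $\langle u_i,u_j\rangle<\tau$. "$H(r,d,p)$ is a clique" means all pairs among its $r$ vertices are edges; "independent set" means no pair is an edge. Let $c_p>0$ be defined by $\mathbb{P}(Z\le -c_p)=p$ for $Z\sim N(0,1)$, let $\varphi$ be the standard normal density and $a=\varphi(c_p)=e^{-c_p^2/2}/\sqrt{2\pi}$. For integers $s,t\ge1$, $c_{s,t}$ is the infimum over all finite $K_t$-free graphs $G$ of the probability that $s$ i.i.d. uniform vertices of $G$ (with replacement) form an independent set. A (multi)set $\{v_1,\dots,v_t\}$ is independent in $H$ if no two of the $v_i$ are adjacent. Logarithms are natural; $o(\cdot)$ is as $t\to\infty$ with $p,D,\delta,K$ fixed. *)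

theory Defs
  imports "HOL-Probability.Probability" "HOL-Library.Landau_Symbols"
begin

definition RdM :: "nat \<Rightarrow> (nat \<Rightarrow> real) measure" where
  "RdM d = PiM {..<d} (\<lambda>_. lborel)"

definition vnorm :: "nat \<Rightarrow> (nat \<Rightarrow> real) \<Rightarrow> real" where
  "vnorm d x = sqrt (\<Sum>k<d. (x k)^2)"

definition ip :: "nat \<Rightarrow> (nat \<Rightarrow> real) \<Rightarrow> (nat \<Rightarrow> real) \<Rightarrow> real" where
  "ip d x y = (\<Sum>k<d. x k * y k)"

definition unit_ball :: "nat \<Rightarrow> (nat \<Rightarrow> real) set" where
  "unit_ball d = {x \<in> space (RdM d). vnorm d x \<le> 1}"

text \<open>Uniform (normalized surface) measure on S^{d-1}: the cone measure, i.e. the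
  push-forward of the normalized Lebesgue measure on the unit ball under x / |x|.\<close>
definition sphere_measure :: "nat \<Rightarrow> (nat \<Rightarrow> real) measure" where
  "sphere_measure d = distr (uniform_measure (RdM d) (unit_ball d)) (RdM d)
      (\<lambda>x. \<lambda>k\<in>{..<d}. x k / vnorm d x)"

definition tau :: "nat \<Rightarrow> real \<Rightarrow> real" where
  "tau d p = (THE \<tau>. measure (sphere_measure d \<Otimes>\<^sub>M sphere_measure d)
      {z \<in> space (sphere_measure d \<Otimes>\<^sub>M sphere_measure d). ip d (fst z) (snd z) < \<tau>} = p)"

definition points_measure :: "nat \<Rightarrow> nat \<Rightarrow> (nat \<Rightarrow> nat \<Rightarrow> real) measure" where
  "points_measure M d = PiM {..<M} (\<lambda>_. sphere_measure d)"

definition adj :: "nat \<Rightarrow> real \<Rightarrow> (nat \<Rightarrow> nat \<Rightarrow> real) \<Rightarrow> nat \<Rightarrow> nat \<Rightarrow> bool" where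
  "adj d p U i j \<longleftrightarrow> i \<noteq> j \<and> ip d (U i) (U j) < tau d p"

definition prob_clique :: "nat \<Rightarrow> nat \<Rightarrow> real \<Rightarrow> real" where
  "prob_clique r d p = measure (points_measure r d)
     {U \<in> space (points_measure r d). \<forall>i<r. \<forall>j<r. i \<noteq> j \<longrightarrow> adj d p U i j}"

definition prob_indep :: "nat \<Rightarrow> nat \<Rightarrow> real \<Rightarrow> real" where
  "prob_indep r d p = measure (points_measure r d)
     {U \<in> space (points_measure r d). \<forall>i<r. \<forall>j<r. \<not> adj d p U i j}"

definition Kt_free :: "nat \<Rightarrow> nat \<Rightarrow> real \<Rightarrow> nat \<Rightarrow> (nat \<Rightarrow> nat \<Rightarrow> real) \<Rightarrow> bool" where
  "Kt_free M d p t U \<longleftrightarrow>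
     \<not> (\<exists>S \<subseteq> {..<M}. card S = t \<and> (\<forall>i\<in>S. \<forall>j\<in>S. i \<noteq> j \<longrightarrow> adj d p U i j))"

definition prob_Kt_free :: "nat \<Rightarrow> nat \<Rightarrow> real \<Rightarrow> nat \<Rightarrow> real" where
  "prob_Kt_free M d p t = measure (points_measure M d)
     {U \<in> space (points_measure M d). Kt_free M d p t U}"

definition vertices_measure :: "nat \<Rightarrow> nat \<Rightarrow> (nat \<Rightarrow> nat) measure" where
  "vertices_measure M t = PiM {..<t} (\<lambda>_. uniform_measure (count_space {..<M}) {..<M})"

definition prob_indep_tuple :: "nat \<Rightarrow> nat \<Rightarrow> real \<Rightarrow> nat \<Rightarrow> real" where
  "prob_indep_tuple M d p t =
     measure (points_measure M d \<Otimes>\<^sub>M vertices_measure M t)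
       {z \<in> space (points_measure M d \<Otimes>\<^sub>M vertices_measure M t).
          \<forall>i<t. \<forall>j<t. \<not> adj d p (fst z) (snd z i) (snd z j)}"

definition cp_const :: "real \<Rightarrow> real" where
  "cp_const p = (THE c. c > 0 \<and> measure (density lborel std_normal_density) {..-c} = p)"

definition a_p :: "real \<Rightarrow> real" where
  "a_p p = exp (- ((cp_const p) ^ 2) / 2) / sqrt (2 * pi)"

definition finite_graph :: "nat \<Rightarrow> (nat \<Rightarrow> nat \<Rightarrow> bool) \<Rightarrow> bool" where
  "finite_graph n E \<longleftrightarrow> n \<ge> 1 \<and> (\<forall>i j. E i j \<longrightarrow> i < n \<and> j < n)
      \<and> (\<forall>i j. E i j \<longrightarrow> E j i) \<and> (\<forall>i. \<not> E i i)"

definition graph_Kt_free :: "nat \<Rightarrow> (nat \<Rightarrow> nat \<Rightarrow> bool) \<Rightarrow> nat \<Rightarrow> bool" where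
  "graph_Kt_free n E t \<longleftrightarrow>
     \<not> (\<exists>S \<subseteq> {..<n}. card S = t \<and> (\<forall>i\<in>S. \<forall>j\<in>S. i \<noteq> j \<longrightarrow> E i j))"

definition graph_indep_prob :: "nat \<Rightarrow> (nat \<Rightarrow> nat \<Rightarrow> bool) \<Rightarrow> nat \<Rightarrow> real" where
  "graph_indep_prob n E s =
     real (card {v \<in> {..<s} \<rightarrow>\<^sub>E {..<n}. \<forall>i<s. \<forall>j<s. \<not> E (v i) (v j)}) / real n ^ s"

definition c_st :: "nat \<Rightarrow> nat \<Rightarrow> real" where
  "c_st s t = Inf {graph_indep_prob n E s | n E. finite_graph n E \<and> graph_Kt_free n E t}"

end

theory Submission
  imports Defs "HOL-Real_Asymp.Real_Asymp"
begin
lemma psf_lborel: "product_sigma_finite (\<lambda>_::nat. lborel)"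
  unfolding product_sigma_finite_def by (simp add: sigma_finite_lborel)

lemma vnorm_meas[measurable]: "vnorm d \<in> borel_measurable (PiM {..<d} (\<lambda>_. lborel))"
  unfolding vnorm_def by measurable

lemma unit_ball_sets: "unit_ball d \<in> sets (RdM d)"
  unfolding unit_ball_def RdM_def by measurable

lemma emeasure_box: assumes "a \<le> b" shows "emeasure (RdM d) (PiE {..<d} (\<lambda>_. {a..b::real})) = ennreal (b - a) ^ d"
  using product_sigma_finite.emeasure_PiM[OF psf_lborel, of "{..<d}" "\<lambda>_. {a..b}"]
  using assms by (simp add: RdM_def)

lemma ball_sub: "unit_ball d \<subseteq> PiE {..<d} (\<lambda>_. {-1..1::real})"
proof
  fix x assume x: "x \<in> unit_ball d"
  then have sp: "x \<in> PiE {..<d} (\<lambda>_. UNIV)" and n: "sqrt (\<Sum>k<d. (x k)^2) \<le> 1"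
    by (auto simp: unit_ball_def RdM_def space_PiM vnorm_def)
  have s: "(\<Sum>k<d. (x k)^2) \<le> 1" using n by (metis real_sqrt_le_1_iff)
  have "(x k)^2 \<le> 1" if "k < d" for k
  proof -
    have "(x k)^2 \<le> (\<Sum>k<d. (x k)^2)"
      using that by (intro member_le_sum) auto
    then show ?thesis using s by linarith
  qed
  then have "\<bar>x k\<bar> \<le> 1" if "k<d" for k using that by (simp add: abs_square_le_1)
  then show "x \<in> PiE {..<d} (\<lambda>_. {-1..1::real})" using sp by (auto simp: PiE_iff abs_le_iff)
qed

lemma box_sub: assumes "d \<ge> 1" shows "PiE {..<d} (\<lambda>_. {-1/d..1/d::real}) \<subseteq> unit_ball d"
proof
  fix x assume x: "x \<in> PiE {..<d} (\<lambda>_. {-1/d..1/d::real})"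
  have "(x k)^2 \<le> 1/d" if "k<d" for k
  proof -
    have "x k \<in> {-1/d..1/d}" using x that by (auto simp: PiE_iff)
    then have "\<bar>x k\<bar> \<le> 1/d" by (auto simp: abs_le_iff)
    then have "(x k)^2 \<le> (1/d)^2" by (metis abs_ge_zero power2_abs power_mono)
    also have "\<dots> \<le> 1/d" using assms by (simp add: power2_eq_square divide_simps)
    finally show ?thesis .
  qed
  then have "(\<Sum>k<d. (x k)^2) \<le> (\<Sum>k<d. 1/d)" by (intro sum_mono) auto
  also have "\<dots> = 1" using assms by simp
  finally have "vnorm d x \<le> 1" by (simp add: vnorm_def)
  moreover have "x \<in> space (RdM d)" using x by (auto simp: RdM_def space_PiM PiE_iff)
  ultimately show "x \<in> unit_ball d" by (simp add: unit_ball_def)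
qed

lemma ball_pos: assumes "d \<ge> 1" shows "emeasure (RdM d) (unit_ball d) \<noteq> 0"
proof -
  have "emeasure (RdM d) (PiE {..<d} (\<lambda>_. {-1/d..1/d::real})) \<le> emeasure (RdM d) (unit_ball d)"
    by (rule emeasure_mono[OF box_sub[OF assms] unit_ball_sets])
  moreover have "emeasure (RdM d) (PiE {..<d} (\<lambda>_. {-1/d..1/d::real})) \<noteq> 0"
    using assms by (simp add: emeasure_box)
  ultimately show ?thesis by auto
qed

lemma ball_fin: "emeasure (RdM d) (unit_ball d) \<noteq> \<infinity>"
proof -
  have "emeasure (RdM d) (unit_ball d) \<le> emeasure (RdM d) (PiE {..<d} (\<lambda>_. {-1..1::real}))"
    by (rule emeasure_mono[OF ball_sub]) (auto simp: RdM_def intro!: sets_PiM_I_finite)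
  then show ?thesis by (auto simp: emeasure_box top_unique power_eq_top_ennreal)
qed

lemma sets_sphere[measurable_cong]: "sets (sphere_measure d) = sets (RdM d)"
  by (simp add: sphere_measure_def)

lemma prob_sphere: assumes "d \<ge> 1" shows "prob_space (sphere_measure d)"
proof -
  interpret P: prob_space "uniform_measure (RdM d) (unit_ball d)"
    by (rule prob_space_uniform_measure[OF ball_pos[OF assms] ball_fin])
  show ?thesis unfolding sphere_measure_def
    by (rule P.prob_space_distr) (simp add: RdM_def, measurable)
qed

lemma prob_points: "d \<ge> 1 \<Longrightarrow> prob_space (points_measure M d)"
  unfolding points_measure_def by (intro prob_space_PiM prob_sphere)

lemma meas_Uik[measurable]: assumes "i < M" "k < d"
  shows "(\<lambda>U. U i k) \<in> borel_measurable (points_measure M d)"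
proof -
  have 1: "(\<lambda>U. U i) \<in> measurable (points_measure M d) (RdM d)"
    using assms measurable_component_singleton[of i "{..<M}" "\<lambda>_. sphere_measure d"]
    unfolding points_measure_def
    by (simp add: measurable_cong_sets[OF refl sets_sphere])
  have 2: "(\<lambda>x. x k) \<in> borel_measurable (RdM d)"
    unfolding RdM_def using assms by (simp add: measurable_lborel2[symmetric]) 
  show ?thesis using measurable_comp[OF 1 2] by (simp add: comp_def)
qed

lemma meas_ip: assumes "i < M" "j < M"
  shows "(\<lambda>U. ip d (U i) (U j)) \<in> borel_measurable (points_measure M d)"
  unfolding ip_def using assms by (intro borel_measurable_sum borel_measurable_times meas_Uik) auto

lemma sets_clique: assumes "S \<subseteq> {..<M}"
  shows "{U \<in> space (points_measure M d). \<forall>a\<in>S. \<forall>b\<in>S. a \<noteq> b \<longrightarrow> adj d p U a b} \<in> sets (points_measure M d)"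
proof -
  have f: "finite S" using assms finite_subset by blast
  have "{U \<in> space (points_measure M d). adj d p U a b} \<in> sets (points_measure M d)" if "a \<in> S" "b \<in> S" for a b
  proof (cases "a = b")
    case False
    then show ?thesis using that assms borel_measurable_less[OF meas_ip[of a M b d], of "\<lambda>_. tau d p"]
      unfolding adj_def by auto
  qed (simp add: adj_def)
  then show ?thesis using f
    by (intro sets.sets_Collect_finite_All sets.sets_Collect_imp) (auto intro!: sets.sets_Collect_finite_All)
qed

lemma sets_indep: assumes "S \<subseteq> {..<M}"
  shows "{U \<in> space (points_measure M d). \<forall>a\<in>S. \<forall>b\<in>S. \<not> adj d p U a b} \<in> sets (points_measure M d)"
proof -
  have f: "finite S" using assms finite_subset by blast
  have "{U \<in> space (points_measure M d). adj d p U a b} \<in> sets (points_measure M d)" if "a \<in> S" "b \<in> S" for a b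
  proof (cases "a = b")
    case False
    then show ?thesis using that assms borel_measurable_less[OF meas_ip[of a M b d], of "\<lambda>_. tau d p"]
      unfolding adj_def by auto
  qed (simp add: adj_def)
  then show ?thesis using f
    by (intro sets.sets_Collect_finite_All sets.sets_Collect_neg) auto
qed

lemma marginal:
  assumes d: "d \<ge> 1" and e: "bij_betw e {..<r} S" and S: "S \<subseteq> {..<M}"
    and A: "A \<in> sets (points_measure r d)"
  shows "measure (points_measure M d) ((\<lambda>U. \<lambda>j\<in>{..<r}. U (e j)) -` A \<inter> space (points_measure M d))
       = measure (points_measure r d) A"
proof -
  have inj: "inj_on e {..<r}" and im: "e \<in> {..<r} \<rightarrow> {..<M}"
    using e S by (auto simp: bij_betw_def)
  have D: "distr (points_measure M d) (points_measure r d) (\<lambda>U. \<lambda>j\<in>{..<r}. U (e j)) = points_measure r d"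
    unfolding points_measure_def
    using distr_PiM_reindex[of "{..<M}" "\<lambda>_. sphere_measure d", OF prob_sphere[OF d] inj im] by simp
  have m: "(\<lambda>U. \<lambda>j\<in>{..<r}. U (e j)) \<in> measurable (points_measure M d) (points_measure r d)"
    unfolding points_measure_def using im
    by (intro measurable_restrict measurable_component_singleton) auto
  show ?thesis
    using measure_distr[OF m A] D by simp
qed

lemma reindex_space:
  assumes "e \<in> {..<r} \<rightarrow> {..<M}" "U \<in> space (points_measure M d)"
  shows "(\<lambda>j\<in>{..<r}. U (e j)) \<in> space (points_measure r d)"
  using assms by (auto simp: points_measure_def space_PiM PiE_iff)

lemma adj_reindex:
  assumes "inj_on e {..<r}" "i < r" "j < r"
  shows "adj d p (\<lambda>j\<in>{..<r}. U (e j)) i j = adj d p U (e i) (e j)"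
proof -
  have "i \<noteq> j \<longleftrightarrow> e i \<noteq> e j" using assms inj_on_eq_iff[of e "{..<r}" i j] by simp
  moreover have "(\<lambda>j\<in>{..<r}. U (e j)) i = U (e i)" using assms by simp
  moreover have "(\<lambda>j\<in>{..<r}. U (e j)) j = U (e j)" using assms by simp
  ultimately show ?thesis unfolding adj_def by simp
qed

lemma clique_S:
  assumes d: "d \<ge> 1" and S: "S \<subseteq> {..<M}"
  shows "measure (points_measure M d) {U \<in> space (points_measure M d). \<forall>a\<in>S. \<forall>b\<in>S. a \<noteq> b \<longrightarrow> adj d p U a b}
     = prob_clique (card S) d p"
proof -
  define r where "r = card S"
  have fS: "finite S" using S finite_subset by blast
  obtain e where e: "bij_betw e {..<r} S"
    using ex_bij_betw_nat_finite[OF fS] by (auto simp: lessThan_atLeast0 r_def)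
  have inj: "inj_on e {..<r}" and im: "e \<in> {..<r} \<rightarrow> {..<M}" and img: "e ` {..<r} = S"
    using e S by (auto simp: bij_betw_def)
  let ?C = "{V \<in> space (points_measure r d). \<forall>i\<in>{..<r}. \<forall>j\<in>{..<r}. i \<noteq> j \<longrightarrow> adj d p V i j}"
  have C: "?C \<in> sets (points_measure r d)" by (rule sets_clique) simp
  have eq: "{U \<in> space (points_measure M d). \<forall>a\<in>S. \<forall>b\<in>S. a \<noteq> b \<longrightarrow> adj d p U a b}
     = (\<lambda>U. \<lambda>j\<in>{..<r}. U (e j)) -` ?C \<inter> space (points_measure M d)"
  proof -
    have "(\<forall>a\<in>S. \<forall>b\<in>S. a \<noteq> b \<longrightarrow> adj d p U a b) \<longleftrightarrow>
          (\<forall>i\<in>{..<r}. \<forall>j\<in>{..<r}. i \<noteq> j \<longrightarrow> adj d p (\<lambda>j\<in>{..<r}. U (e j)) i j)" for U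
      unfolding img[symmetric] using inj by (auto simp: adj_reindex) (metis inj_on_def lessThan_iff)+
    then show ?thesis using reindex_space[OF im] by auto
  qed
  show ?thesis
  proof -
    have X: "measure (points_measure M d) ((\<lambda>U. \<lambda>j\<in>{..<r}. U (e j)) -` ?C \<inter> space (points_measure M d)) = measure (points_measure r d) ?C"
      by (rule marginal[OF d e S C])
    have Y: "prob_clique r d p = measure (points_measure r d) ?C" unfolding prob_clique_def by (simp only: Ball_def lessThan_iff)
    show ?thesis unfolding eq r_def[symmetric] X Y ..
  qed
qed

lemma indep_S:
  assumes d: "d \<ge> 1" and S: "S \<subseteq> {..<M}"
  shows "measure (points_measure M d) {U \<in> space (points_measure M d). \<forall>a\<in>S. \<forall>b\<in>S. \<not> adj d p U a b}
     = prob_indep (card S) d p"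
proof -
  define r where "r = card S"
  have fS: "finite S" using S finite_subset by blast
  obtain e where e: "bij_betw e {..<r} S"
    using ex_bij_betw_nat_finite[OF fS] by (auto simp: lessThan_atLeast0 r_def)
  have inj: "inj_on e {..<r}" and im: "e \<in> {..<r} \<rightarrow> {..<M}" and img: "e ` {..<r} = S"
    using e S by (auto simp: bij_betw_def)
  let ?C = "{V \<in> space (points_measure r d). \<forall>i\<in>{..<r}. \<forall>j\<in>{..<r}. \<not> adj d p V i j}"
  have C: "?C \<in> sets (points_measure r d)" by (rule sets_indep) simp
  have eq: "{U \<in> space (points_measure M d). \<forall>a\<in>S. \<forall>b\<in>S. \<not> adj d p U a b}
     = (\<lambda>U. \<lambda>j\<in>{..<r}. U (e j)) -` ?C \<inter> space (points_measure M d)"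
  proof -
    have "(\<forall>a\<in>S. \<forall>b\<in>S. \<not> adj d p U a b) \<longleftrightarrow>
          (\<forall>i\<in>{..<r}. \<forall>j\<in>{..<r}. \<not> adj d p (\<lambda>j\<in>{..<r}. U (e j)) i j)" for U
      unfolding img[symmetric] using inj by (auto simp: adj_reindex)
    then show ?thesis using reindex_space[OF im] by auto
  qed
  show ?thesis
  proof -
    have X: "measure (points_measure M d) ((\<lambda>U. \<lambda>j\<in>{..<r}. U (e j)) -` ?C \<inter> space (points_measure M d)) = measure (points_measure r d) ?C"
      by (rule marginal[OF d e S C])
    have Y: "prob_indep r d p = measure (points_measure r d) ?C" unfolding prob_indep_def by (simp only: Ball_def lessThan_iff)
    show ?thesis unfolding eq r_def[symmetric] X Y ..
  qed
qed

lemma free_bound: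
  assumes d: "d \<ge> 1"
  shows "1 - real (M choose t) * prob_clique t d p \<le> prob_Kt_free M d p t"
    and "prob_Kt_free M d p t \<le> 1"
proof -
  interpret P: prob_space "points_measure M d" by (rule prob_points[OF d])
  let ?SS = "{S. S \<subseteq> {..<M} \<and> card S = t}"
  let ?C = "\<lambda>S. {U \<in> space (points_measure M d). \<forall>a\<in>S. \<forall>b\<in>S. a \<noteq> b \<longrightarrow> adj d p U a b}"
  have fin: "finite ?SS" by (rule finite_subset[of _ "Pow {..<M}"]) auto
  have cardSS: "card ?SS = M choose t" using n_subsets[of "{..<M}" t] by simp
  have Cs: "?C S \<in> sets (points_measure M d)" if "S \<in> ?SS" for S
    by (rule sets_clique) (use that in simp)
  have U: "(\<Union>S\<in>?SS. ?C S) \<in> sets (points_measure M d)"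
    using fin Cs by (rule sets.finite_UN)
  have eq: "{U \<in> space (points_measure M d). Kt_free M d p t U} = space (points_measure M d) - (\<Union>S\<in>?SS. ?C S)"
  proof -
    have "Kt_free M d p t U \<longleftrightarrow> U \<notin> (\<Union>S\<in>?SS. ?C S)" if "U \<in> space (points_measure M d)" for U
      unfolding Kt_free_def using that by auto
    then show ?thesis by blast
  qed
  have "P.prob (\<Union>S\<in>?SS. ?C S) \<le> (\<Sum>S\<in>?SS. P.prob (?C S))"
    by (rule measure_UNION_le[OF fin Cs]) 
  also have "\<dots> = (\<Sum>S\<in>?SS. prob_clique t d p)"
    by (intro sum.cong refl) (auto simp: clique_S[OF d])
  also have "\<dots> = real (M choose t) * prob_clique t d p" using cardSS by simp
  finally have 1: "P.prob (\<Union>S\<in>?SS. ?C S) \<le> real (M choose t) * prob_clique t d p" .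
  have 2: "prob_Kt_free M d p t = 1 - P.prob (\<Union>S\<in>?SS. ?C S)"
    unfolding prob_Kt_free_def eq using P.prob_compl[OF U] by simp
  show "1 - real (M choose t) * prob_clique t d p \<le> prob_Kt_free M d p t" using 1 2 by simp
  show "prob_Kt_free M d p t \<le> 1" unfolding prob_Kt_free_def by simp
qed

lemma prob_vert: "M \<ge> 1 \<Longrightarrow> prob_space (vertices_measure M t)"
  unfolding vertices_measure_def
  by (intro prob_space_PiM prob_space_uniform_measure) auto

lemma sets_vert_single:
  assumes "v \<in> space (vertices_measure M t)"
  shows "{v} \<in> sets (vertices_measure M t)"
proof -
  have "{v} = PiE {..<t} (\<lambda>i. {v i})"
    using assms by (intro PiE_singleton[symmetric]) (auto simp: vertices_measure_def space_PiM PiE_iff)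
  also have "\<dots> \<in> sets (vertices_measure M t)"
    using assms unfolding vertices_measure_def by (intro sets_PiM_I_finite) (auto simp: space_PiM PiE_iff)
  finally show ?thesis .
qed

lemma measure_vert_single:
  assumes M: "M \<ge> 1" and v: "v \<in> space (vertices_measure M t)"
  shows "measure (vertices_measure M t) {v} = 1 / real M ^ t"
proof -
  have psf: "product_sigma_finite (\<lambda>_::nat. uniform_measure (count_space {..<M}) {..<M})"
    unfolding product_sigma_finite_def using M
    by (auto intro!: prob_space_imp_sigma_finite prob_space_uniform_measure)
  have vi: "v i < M" if "i < t" for i using v that by (auto simp: vertices_measure_def space_PiM PiE_iff)
  have "{v} = PiE {..<t} (\<lambda>i. {v i})"
    using v by (intro PiE_singleton[symmetric]) (auto simp: vertices_measure_def space_PiM PiE_iff)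
  then have "emeasure (vertices_measure M t) {v} = (\<Prod>i\<in>{..<t}. emeasure (uniform_measure (count_space {..<M}) {..<M}) {v i})"
    unfolding vertices_measure_def
    using product_sigma_finite.emeasure_PiM[OF psf, of "{..<t}" "\<lambda>i. {v i}"] vi by simp
  also have "\<dots> = (\<Prod>i\<in>{..<t}. ennreal (1 / real M))"
  proof (intro prod.cong refl)
    fix i assume "i \<in> {..<t}"
    then have "{..<M} \<inter> {v i} = {v i}" using vi by auto
    have "emeasure (uniform_measure (count_space {..<M}) {..<M}) {v i}
       = emeasure (count_space {..<M}) ({..<M} \<inter> {v i}) / emeasure (count_space {..<M}) {..<M}"
      using vi \<open>i \<in> {..<t}\<close> by (intro emeasure_uniform_measure) auto
    also have "\<dots> = 1 / ennreal (real M)" using \<open>{..<M} \<inter> {v i} = {v i}\<close> vi \<open>i \<in> {..<t}\<close>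
      by (simp add: ennreal_of_nat_eq_real_of_nat emeasure_count_space_finite)
    also have "\<dots> = ennreal (1 / real M)" using M
      by (metis divide_ennreal ennreal_1 of_nat_0_less_iff zero_le_one less_le_trans zero_less_one)
    finally show "emeasure (uniform_measure (count_space {..<M}) {..<M}) {v i} = ennreal (1 / real M)" .
  qed
  also have "\<dots> = ennreal ((1 / real M) ^ t)" by (simp add: ennreal_power)
  finally show ?thesis unfolding measure_def by (simp add: power_divide)
qed

lemma space_vert: "space (vertices_measure M t) = PiE {..<t} (\<lambda>_. {..<M})"
  by (simp add: vertices_measure_def space_PiM)

definition Aset :: "nat \<Rightarrow> nat \<Rightarrow> real \<Rightarrow> nat \<Rightarrow> (nat \<Rightarrow> nat) \<Rightarrow> (nat \<Rightarrow> nat \<Rightarrow> real) set" where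
  "Aset M d p t v = {U \<in> space (points_measure M d). \<forall>a\<in>v ` {..<t}. \<forall>b\<in>v ` {..<t}. \<not> adj d p U a b}"

lemma Aset_sets: "v \<in> PiE {..<t} (\<lambda>_. {..<M}) \<Longrightarrow> Aset M d p t v \<in> sets (points_measure M d)"
  unfolding Aset_def by (rule sets_indep) auto

lemma Aset_measure: "d \<ge> 1 \<Longrightarrow> v \<in> PiE {..<t} (\<lambda>_. {..<M}) \<Longrightarrow>
    measure (points_measure M d) (Aset M d p t v) = prob_indep (card (v ` {..<t})) d p"
  unfolding Aset_def by (rule indep_S) auto

lemma tuple_bound:
  assumes d: "d \<ge> 1" and M: "M \<ge> 1"
  shows "prob_indep_tuple M d p t \<le>
    (\<Sum>v\<in>PiE {..<t} (\<lambda>_. {..<M}). prob_indep (card (v ` {..<t})) d p) / real M ^ t"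
proof -
  let ?P = "points_measure M d" and ?V = "vertices_measure M t"
  let ?VV = "PiE {..<t} (\<lambda>_. {..<M})"
  interpret P: prob_space ?P by (rule prob_points[OF d])
  interpret V: prob_space ?V by (rule prob_vert[OF M])
  interpret PV: pair_prob_space ?P ?V ..
  have finV: "finite ?VV" by (simp add: finite_PiE)
  have Bs: "Aset M d p t v \<times> {v} \<in> sets (?P \<Otimes>\<^sub>M ?V)" if "v \<in> ?VV" for v
    using that Aset_sets sets_vert_single[of v M t] by (auto simp: space_vert)
  have sub: "{z \<in> space (?P \<Otimes>\<^sub>M ?V). \<forall>i<t. \<forall>j<t. \<not> adj d p (fst z) (snd z i) (snd z j)}
      \<subseteq> (\<Union>v\<in>?VV. Aset M d p t v \<times> {v})"
  proof
    fix z assume z: "z \<in> {z \<in> space (?P \<Otimes>\<^sub>M ?V). \<forall>i<t. \<forall>j<t. \<not> adj d p (fst z) (snd z i) (snd z j)}"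
    then have z1: "fst z \<in> space ?P" and z2: "snd z \<in> ?VV"
      and z3: "\<forall>i<t. \<forall>j<t. \<not> adj d p (fst z) (snd z i) (snd z j)"
      by (auto simp: space_pair_measure space_vert)
    have "fst z \<in> Aset M d p t (snd z)" using z1 z3 by (auto simp: Aset_def)
    then have "z \<in> Aset M d p t (snd z) \<times> {snd z}" by (simp add: mem_Times_iff)
    then show "z \<in> (\<Union>v\<in>?VV. Aset M d p t v \<times> {v})" by (rule UN_I[OF z2])
  qed
  have "prob_indep_tuple M d p t \<le> PV.prob (\<Union>v\<in>?VV. Aset M d p t v \<times> {v})"
    unfolding prob_indep_tuple_def
    by (rule PV.finite_measure_mono[OF sub]) (use finV Bs in \<open>rule sets.finite_UN\<close>)
  also have "\<dots> \<le> (\<Sum>v\<in>?VV. PV.prob (Aset M d p t v \<times> {v}))"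
    by (rule measure_UNION_le[OF finV Bs])
  also have "\<dots> = (\<Sum>v\<in>?VV. prob_indep (card (v ` {..<t})) d p * (1 / real M ^ t))"
  proof (intro sum.cong refl)
    fix v assume v: "v \<in> ?VV"
    have "emeasure (?P \<Otimes>\<^sub>M ?V) (Aset M d p t v \<times> {v}) = emeasure ?P (Aset M d p t v) * emeasure ?V {v}"
      using v Aset_sets sets_vert_single[of v M t] by (intro V.emeasure_pair_measure_Times) (auto simp: space_vert)
    then have "PV.prob (Aset M d p t v \<times> {v}) = P.prob (Aset M d p t v) * V.prob {v}"
      by (simp add: measure_def enn2real_mult)
    then show "PV.prob (Aset M d p t v \<times> {v}) = prob_indep (card (v ` {..<t})) d p * (1 / real M ^ t)"
      using v Aset_measure[OF d v] measure_vert_single[OF M, of v t] by (simp add: space_vert)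
  qed
  also have "\<dots> = (\<Sum>v\<in>?VV. prob_indep (card (v ` {..<t})) d p) / real M ^ t"
    by (simp add: sum_divide_distrib)
  finally show ?thesis .
qed

definition Egr :: "nat \<Rightarrow> nat \<Rightarrow> real \<Rightarrow> (nat \<Rightarrow> nat \<Rightarrow> real) \<Rightarrow> nat \<Rightarrow> nat \<Rightarrow> bool" where
  "Egr M d p U = (\<lambda>i j. i < M \<and> j < M \<and> adj d p U i j)"

lemma sets_free: "{U \<in> space (points_measure M d). Kt_free M d p t U} \<in> sets (points_measure M d)"
proof -
  let ?SS = "{S. S \<subseteq> {..<M} \<and> card S = t}"
  let ?C = "\<lambda>S. {U \<in> space (points_measure M d). \<forall>a\<in>S. \<forall>b\<in>S. a \<noteq> b \<longrightarrow> adj d p U a b}"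
  have fin: "finite ?SS" by (rule finite_subset[of _ "Pow {..<M}"]) auto
  have Cs: "?C S \<in> sets (points_measure M d)" if "S \<in> ?SS" for S
    by (rule sets_clique) (use that in simp)
  have U: "(\<Union>S\<in>?SS. ?C S) \<in> sets (points_measure M d)"
    using fin Cs by (rule sets.finite_UN)
  have eq: "{U \<in> space (points_measure M d). Kt_free M d p t U} = space (points_measure M d) - (\<Union>S\<in>?SS. ?C S)"
  proof -
    have "Kt_free M d p t U \<longleftrightarrow> U \<notin> (\<Union>S\<in>?SS. ?C S)" if "U \<in> space (points_measure M d)" for U
      unfolding Kt_free_def using that by auto
    then show ?thesis by blast
  qed
  show ?thesis unfolding eq using U by auto
qed

lemma gip_eq:
  assumes U: "U \<in> space (points_measure M d)"
  shows "graph_indep_prob M (Egr M d p U) t =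
     (\<Sum>v\<in>PiE {..<t} (\<lambda>_. {..<M}). indicator (Aset M d p t v) U) / real M ^ t"
proof -
  let ?VV = "PiE {..<t} (\<lambda>_. {..<M})"
  have finV: "finite ?VV" by (simp add: finite_PiE)
  have iff: "(\<forall>i<t. \<forall>j<t. \<not> Egr M d p U (v i) (v j)) \<longleftrightarrow> U \<in> Aset M d p t v" if v: "v \<in> ?VV" for v
  proof -
    have "v i < M" if "i < t" for i using v that by (auto simp: PiE_iff)
    then show ?thesis using U unfolding Egr_def Aset_def by auto
  qed
  have "real (card {v \<in> ?VV. \<forall>i<t. \<forall>j<t. \<not> Egr M d p U (v i) (v j)}) =
        (\<Sum>v\<in>{v \<in> ?VV. \<forall>i<t. \<forall>j<t. \<not> Egr M d p U (v i) (v j)}. 1::real)" by simp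
  also have "\<dots> = (\<Sum>v\<in>?VV. if (\<forall>i<t. \<forall>j<t. \<not> Egr M d p U (v i) (v j)) then 1 else 0)"
    by (rule sum.inter_filter[OF finV])
  also have "\<dots> = (\<Sum>v\<in>?VV. indicator (Aset M d p t v) U)"
    by (intro sum.cong refl) (simp add: iff indicator_def)
  finally show ?thesis unfolding graph_indep_prob_def by simp
qed

lemma avg:
  assumes d: "d \<ge> 1" and M: "M \<ge> 1" and pf: "prob_Kt_free M d p t > 0"
    and Q: "(\<Sum>v\<in>PiE {..<t} (\<lambda>_. {..<M}). prob_indep (card (v ` {..<t})) d p) / real M ^ t \<le> B"
    and B: "B > 0"
  shows "\<exists>U\<in>space (points_measure M d). Kt_free M d p t U \<and>
      prob_Kt_free M d p t * graph_indep_prob M (Egr M d p U) t \<le> 2 * B"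
proof (rule ccontr)
  let ?P = "points_measure M d"
  let ?VV = "PiE {..<t} (\<lambda>_. {..<M})"
  let ?F = "{U \<in> space ?P. Kt_free M d p t U}"
  let ?pf = "prob_Kt_free M d p t"
  let ?G = "\<lambda>U. (\<Sum>v\<in>?VV. indicator (Aset M d p t v) U) / real M ^ t :: real"
  interpret P: prob_space ?P by (rule prob_points[OF d])
  assume "\<not> ?thesis"
  then have big: "?pf * ?G U > 2 * B" if "U \<in> ?F" for U
    using that gip_eq[of U M d p t] by (auto simp: not_le)
  have finV: "finite ?VV" by (simp add: finite_PiE)
  have ii: "integrable ?P (indicator (Aset M d p t v) :: _ \<Rightarrow> real)" if "v \<in> ?VV" for v
    using that Aset_sets by (intro integrable_real_indicator) (auto simp: less_top[symmetric])
  have intG: "integrable ?P ?G"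
  proof -
    have "integrable ?P (\<lambda>U. \<Sum>v\<in>?VV. indicator (Aset M d p t v) U :: real)"
      by (rule Bochner_Integration.integrable_sum) (rule ii)
    then show ?thesis by (rule integrable_divide_zero)
  qed
  have "integral\<^sup>L ?P ?G = (\<Sum>v\<in>?VV. P.prob (Aset M d p t v)) / real M ^ t"
  proof -
    have "integral\<^sup>L ?P (\<lambda>U. \<Sum>v\<in>?VV. indicator (Aset M d p t v) U :: real)
        = (\<Sum>v\<in>?VV. integral\<^sup>L ?P (indicator (Aset M d p t v) :: _ \<Rightarrow> real))"
      by (rule Bochner_Integration.integral_sum) (rule ii)
    also have "\<dots> = (\<Sum>v\<in>?VV. P.prob (Aset M d p t v))"
      using Aset_sets[THEN sets.sets_into_space] by (intro sum.cong refl) (simp add: Int_absorb2)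
    finally show ?thesis by (simp add: integral_divide_zero)
  qed
  also have "\<dots> = (\<Sum>v\<in>?VV. prob_indep (card (v ` {..<t})) d p) / real M ^ t"
    by (simp add: Aset_measure[OF d])
  finally have IG: "integral\<^sup>L ?P ?G \<le> B" using Q M by simp
  have Fs: "?F \<in> sets ?P" by (rule sets_free)
  have pfF: "?pf = P.prob ?F" unfolding prob_Kt_free_def ..
  have "integral\<^sup>L ?P (\<lambda>U. (2 * B / ?pf) * indicator ?F U) \<le> integral\<^sup>L ?P ?G"
  proof (rule integral_mono)
    have "integrable ?P (indicator ?F :: _ \<Rightarrow> real)"
      using Fs by (intro integrable_real_indicator) (auto simp: less_top[symmetric])
    then show "integrable ?P (\<lambda>U. (2 * B / ?pf) * indicator ?F U)" by (rule integrable_mult_right)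
    show "integrable ?P ?G" by (rule intG)
    fix U assume U: "U \<in> space ?P"
    have G0: "?G U \<ge> 0" by (intro divide_nonneg_nonneg sum_nonneg) auto
    show "(2 * B / ?pf) * indicator ?F U \<le> ?G U"
    proof (cases "U \<in> ?F")
      case True
      then have "2 * B < ?pf * ?G U" by (rule big)
      then have "2 * B / ?pf < ?G U" using pf by (metis pos_divide_less_eq mult.commute)
      then show ?thesis using True by simp
    next
      case False then show ?thesis using G0 by simp
    qed
  qed
  also have "integral\<^sup>L ?P (\<lambda>U. (2 * B / ?pf) * indicator ?F U) = 2 * B"
    using Fs pf pfF by (simp add: Int_absorb2 sets.sets_into_space)
  finally show False using IG B by simp
qed

lemma choose2_real: "2 * real (t choose 2) = real t * (real t - 1)"
proof (induction t)
  case (Suc t)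
  have "(Suc t) choose 2 = (t choose 1) + (t choose 2)"
    by (simp add: numeral_2_eq_2)
  then show ?case using Suc by (simp add: algebra_simps)
qed simp

lemma choose3_real: "6 * real (t choose 3) = real t * (real t - 1) * (real t - 2)"
proof (induction t)
  case (Suc t)
  have "(Suc t) choose 3 = (t choose 2) + (t choose 3)"
    by (simp add: numeral_3_eq_3 numeral_2_eq_2)
  then have "6 * real ((Suc t) choose 3) = 3 * (2 * real (t choose 2)) + 6 * real (t choose 3)" by simp
  also have "\<dots> = 3 * (real t * (real t - 1)) + real t * (real t - 1) * (real t - 2)"
    using Suc choose2_real[of t] by simp
  finally show ?case by (simp add: algebra_simps)
qed simp

lemma R1:
  fixes p \<delta> K D kap a m :: real and t M :: nat
  assumes p: "0 < p" "p < 1" and D: "D > 0" and t: "t \<ge> 2" and a: "a \<ge> 0"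
    and kap: "kap = a ^ 3 / (6 * p ^ 3)"
    and m: "m = - ln p / 2 + kap / D - K / D^2 - \<delta>"
    and M: "real M \<le> exp (m * real t)"
    and PC: "PC \<le> p ^ (t choose 2) * exp (- (a ^ 3 / (p ^ 3 * (D * real t))) * real (t choose 3)
                 + K * real t ^ 3 / (D * (D * real t)))"
  shows "real (M choose t) * PC \<le> exp (- \<delta> * (real t)^2 + (- ln p / 2 + 3 * kap / D) * real t)"
proof -
  have t0: "real t > 0" using t by simp
  have "M choose t \<le> M ^ t" by (cases "t \<le> M") (auto simp: binomial_le_pow binomial_eq_0)
  then have "real (M choose t) \<le> real M ^ t" by (metis of_nat_le_iff of_nat_power)
  also have "\<dots> \<le> exp (m * real t) ^ t" by (rule power_mono[OF M]) simp
  also have "\<dots> = exp (m * (real t)^2)" by (simp add: exp_of_nat_mult[symmetric] power2_eq_square mult_ac)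
  finally have B1: "real (M choose t) \<le> exp (m * (real t)^2)" .
  have B2: "p ^ (t choose 2) = exp (ln p * (real t * (real t - 1) / 2))"
  proof -
    have "p ^ (t choose 2) = exp (ln p * real (t choose 2))"
      using p by (simp add: exp_of_nat_mult[symmetric] powr_realpow[symmetric] powr_def mult.commute)
    then show ?thesis using choose2_real[of t] by (metis nonzero_mult_div_cancel_left zero_neq_numeral)
  qed
  have B3: "- (a ^ 3 / (p ^ 3 * (D * real t))) * real (t choose 3) = - kap * ((real t - 1) * (real t - 2)) / D"
  proof -
    have Ceq: "real (t choose 3) = real t * (real t - 1) * (real t - 2) / 6" using choose3_real[of t] by simp
    show ?thesis unfolding Ceq kap using t0 D p by (simp add: field_simps)
  qed
  have B4: "K * real t ^ 3 / (D * (D * real t)) = K / D^2 * (real t)^2"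
    using t0 D by (simp add: field_simps power2_eq_square power3_eq_cube)
  have PC': "PC \<le> exp (ln p * (real t * (real t - 1) / 2) + (- kap * ((real t - 1) * (real t - 2)) / D + K / D^2 * (real t)^2))"
    using PC unfolding B2 B3 B4 by (simp add: exp_add)
  have kap0: "kap \<ge> 0" unfolding kap using a p by simp
  have "real (M choose t) * PC \<le> exp (m * (real t)^2) * exp (ln p * (real t * (real t - 1) / 2) + (- kap * ((real t - 1) * (real t - 2)) / D + K / D^2 * (real t)^2))"
  proof (cases "PC \<ge> 0")
    case True then show ?thesis using B1 PC' by (intro mult_mono) auto
  next
    case False
    then have "real (M choose t) * PC \<le> 0" by (simp add: mult_nonneg_nonpos)
    also have "0 \<le> exp (m * (real t)^2) * exp (ln p * (real t * (real t - 1) / 2) + (- kap * ((real t - 1) * (real t - 2)) / D + K / D^2 * (real t)^2))"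
      by simp
    finally show ?thesis .
  qed
  also have "\<dots> = exp (- \<delta> * (real t)^2 + (- ln p / 2 + 3 * kap / D) * real t - 2 * kap / D)"
    unfolding exp_add[symmetric] m using D by (simp add: field_simps power2_eq_square)
  also have "\<dots> \<le> exp (- \<delta> * (real t)^2 + (- ln p / 2 + 3 * kap / D) * real t)"
    using kap0 D by simp
  finally show ?thesis .
qed

lemma R2:
  fixes p \<delta> K D a m lam \<alpha> A PI :: real and t r M :: nat
  assumes p: "0 < p" "p < 1/2" and D: "D > 0" and K: "K \<ge> 0" and dl: "\<delta> \<ge> 0"
    and r: "1 \<le> r" "r \<le> t" and a: "a \<ge> 0"
    and lam: "lam = a ^ 3 / (6 * (1 - p) ^ 3)"
    and m: "m = A - K / D^2 - \<delta>"
    and M: "M \<ge> 1" and Mbig: "m \<le> 0 \<or> exp (m * real t) \<le> 2 * real M"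
    and PI0: "PI \<ge> 0"
    and PI: "PI \<le> (1 - p) ^ (r choose 2) * exp ((a ^ 3 / ((1 - p) ^ 3 * (D * real t))) * real (r choose 3)
                 + K * real r ^ 3 / (D * (D * real t)))"
    and al: "\<alpha> \<le> (1 - real r / real t) * A - (real r / real t)^2 / 2 * ln (1 - p)
                 - lam / D * (real r / real t)^3 - (2 - real r / real t) * K / D^2 - \<delta>"
  shows "real M ^ r * real r ^ t / real M ^ t * PI
      \<le> exp (- \<alpha> * (real t)^2 + (ln 2 - ln (1 - p) / 2) * real t + real t * ln (real t))"
proof -
  have t0: "real t > 0" using r by simp
  have M0: "real M > 0" using M by simp
  have lp: "ln (1 - p) < 0" using p by simp
  define \<theta> where "\<theta> = real r / real t"
  have th: "0 \<le> \<theta>" "\<theta> \<le> 1" using r t0 by (auto simp: \<theta>_def divide_simps)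
  have r_eq: "real r = \<theta> * real t" using t0 by (simp add: \<theta>_def)
  have tr: "real (t - r) = real t - real r" using r by simp
  have S1: "real M ^ r / real M ^ t \<le> 2 ^ t * exp (- m * real t * (real t - real r))"
  proof -
    have eq: "real M ^ r / real M ^ t = 1 / real M ^ (t - r)"
      using M0 r by (simp add: power_diff)
    show ?thesis
    proof (cases "m \<le> 0")
      case True
      have "1 / real M ^ (t - r) \<le> 1" using M by simp
      also have "1 \<le> exp (- m * real t * (real t - real r))"
      proof -
        have "m * real t \<le> 0" using True by (simp add: mult_nonpos_nonneg)
        moreover have "real t - real r \<ge> 0" using r by simp
        ultimately have "m * real t * (real t - real r) \<le> 0" by (rule mult_nonpos_nonneg)
        then show ?thesis by simp
      qed
      also have "\<dots> \<le> 2 ^ t * exp (- m * real t * (real t - real r))"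
        by simp
      finally show ?thesis using eq by simp
    next
      case False
      then have big: "exp (m * real t) / 2 \<le> real M" using Mbig by simp
      have "(exp (m * real t) / 2) ^ (t - r) \<le> real M ^ (t - r)"
        by (rule power_mono[OF big]) simp
      moreover have "(exp (m * real t) / 2) ^ (t - r) = exp (m * real t * (real t - real r)) / 2 ^ (t - r)"
        by (simp add: power_divide exp_of_nat_mult[symmetric] tr mult_ac)
      ultimately have "exp (m * real t * (real t - real r)) / 2 ^ (t - r) \<le> real M ^ (t - r)" by simp
      then have "1 / real M ^ (t - r) \<le> 1 / (exp (m * real t * (real t - real r)) / 2 ^ (t - r))"
        using M0 by (intro divide_left_mono) (auto intro!: mult_pos_pos divide_pos_pos)
      also have "\<dots> = 2 ^ (t - r) / exp (m * real t * (real t - real r))" by simp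
      also have "\<dots> = 2 ^ (t - r) * exp (- m * real t * (real t - real r))"
        by (simp add: exp_minus divide_inverse)
      also have "\<dots> \<le> 2 ^ t * exp (- m * real t * (real t - real r))"
        by (intro mult_right_mono power_increasing) auto
      finally show ?thesis using eq by simp
    qed
  qed
  have S2: "real r ^ t \<le> exp (real t * ln (real t))"
  proof -
    have "real r ^ t \<le> real t ^ t" using r by (intro power_mono) auto
    also have "\<dots> = exp (real t * ln (real t))"
      using t0 by (simp add: exp_of_nat_mult)
    finally show ?thesis .
  qed
  have S3: "PI \<le> exp (ln (1 - p) * (real r)^2 / 2 - ln (1 - p) * real t / 2
              + lam * (real r)^3 / (D * real t) + K * (real r)^3 / (D^2 * real t))"
  proof -
    have c2: "(1 - p) ^ (r choose 2) = exp (ln (1 - p) * (real r * (real r - 1) / 2))"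
    proof -
      have "exp (ln (1 - p) * real (r choose 2)) = exp (real (r choose 2) * ln (1 - p))"
        by (simp add: mult.commute)
      also have "\<dots> = (1 - p) ^ (r choose 2)" using p by (simp add: exp_of_nat_mult)
      finally have "(1 - p) ^ (r choose 2) = exp (ln (1 - p) * real (r choose 2))" by simp
      then show ?thesis using choose2_real[of r] by (metis nonzero_mult_div_cancel_left zero_neq_numeral)
    qed
    have e1: "ln (1 - p) * (real r * (real r - 1) / 2) \<le> ln (1 - p) * (real r)^2 / 2 - ln (1 - p) * real t / 2"
    proof -
      have "- ln (1 - p) * real r \<le> - ln (1 - p) * real t" using lp r by (intro mult_left_mono) auto
      then show ?thesis by (simp add: field_simps power2_eq_square)
    qed
    have c3: "(a ^ 3 / ((1 - p) ^ 3 * (D * real t))) * real (r choose 3) \<le> lam * (real r)^3 / (D * real t)"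
    proof -
      have Ceq: "real (r choose 3) = real r * (real r - 1) * (real r - 2) / 6" using choose3_real[of r] by simp
      have lam0: "lam \<ge> 0" using lam a p by simp
      have "real r * (real r - 1) * (real r - 2) \<le> (real r)^3"
      proof -
        have "(real r - 1) * (real r - 2) \<le> (real r)^2" using r by (simp add: algebra_simps power2_eq_square)
        then have "real r * ((real r - 1) * (real r - 2)) \<le> real r * (real r)^2" by (intro mult_left_mono) auto
        then show ?thesis by (simp add: power3_eq_cube power2_eq_square mult_ac)
      qed
      then have "lam * (real r * (real r - 1) * (real r - 2)) / (D * real t) \<le> lam * (real r)^3 / (D * real t)"
        using lam0 D t0 by (intro divide_right_mono mult_left_mono) auto
      moreover have "(a ^ 3 / ((1 - p) ^ 3 * (D * real t))) * real (r choose 3) = lam * (real r * (real r - 1) * (real r - 2)) / (D * real t)"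
        unfolding Ceq lam using p D t0 by (simp add: field_simps)
      ultimately show ?thesis by simp
    qed
    have c4: "K * real r ^ 3 / (D * (D * real t)) = K * (real r)^3 / (D^2 * real t)"
      by (simp add: power2_eq_square mult_ac)
    have "PI \<le> exp (ln (1 - p) * (real r * (real r - 1) / 2)) * exp ((a ^ 3 / ((1 - p) ^ 3 * (D * real t))) * real (r choose 3)
                 + K * real r ^ 3 / (D * (D * real t)))" using PI c2 by simp
    also have "\<dots> = exp (ln (1 - p) * (real r * (real r - 1) / 2) + (a ^ 3 / ((1 - p) ^ 3 * (D * real t))) * real (r choose 3)
                 + K * (real r) ^ 3 / (D^2 * real t))" by (simp add: exp_add[symmetric] c4)
    also have "\<dots> \<le> exp (ln (1 - p) * (real r)^2 / 2 - ln (1 - p) * real t / 2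
              + lam * (real r)^3 / (D * real t) + K * (real r)^3 / (D^2 * real t))"
      using e1 c3 by simp
    finally show ?thesis .
  qed
  have S5: "- m * real t * (real t - real r) + ln (1 - p) * (real r)^2 / 2
          + lam * (real r)^3 / (D * real t) + K * (real r)^3 / (D^2 * real t) \<le> - \<alpha> * (real t)^2"
  proof -
    have eq: "- m * real t * (real t - real r) + ln (1 - p) * (real r)^2 / 2
          + lam * (real r)^3 / (D * real t) + K * (real r)^3 / (D^2 * real t)
        = (real t)^2 * (- m * (1 - \<theta>) + ln (1 - p) * \<theta>^2 / 2 + lam * \<theta>^3 / D + K * \<theta>^3 / D^2)"
      unfolding r_eq using t0 D by (simp add: field_simps power2_eq_square power3_eq_cube)
    have diff: "- ((1 - \<theta>) * A - \<theta>^2 / 2 * ln (1 - p) - lam / D * \<theta>^3 - (2 - \<theta>) * K / D^2 - \<delta>)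
        - (- m * (1 - \<theta>) + ln (1 - p) * \<theta>^2 / 2 + lam * \<theta>^3 / D + K * \<theta>^3 / D^2)
        = K / D^2 * (1 - \<theta>^3) + \<theta> * \<delta>"
      unfolding m using D by (simp add: field_simps power2_eq_square power3_eq_cube)
    have "\<theta>^3 \<le> 1" using th by (simp add: power_le_one)
    then have "K / D^2 * (1 - \<theta>^3) + \<theta> * \<delta> \<ge> 0" using K D th dl by simp
    then have "- m * (1 - \<theta>) + ln (1 - p) * \<theta>^2 / 2 + lam * \<theta>^3 / D + K * \<theta>^3 / D^2 \<le> - \<alpha>"
      using diff al unfolding \<theta>_def[symmetric] by linarith
    then have "(real t)^2 * (- m * (1 - \<theta>) + ln (1 - p) * \<theta>^2 / 2 + lam * \<theta>^3 / D + K * \<theta>^3 / D^2) \<le> (real t)^2 * (- \<alpha>)"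
      by (rule mult_left_mono) simp
    then show ?thesis unfolding eq by (simp add: mult.commute)
  qed
  have "real M ^ r * real r ^ t / real M ^ t * PI = (real M ^ r / real M ^ t) * real r ^ t * PI" by simp
  also have "\<dots> \<le> (2 ^ t * exp (- m * real t * (real t - real r))) * exp (real t * ln (real t))
      * exp (ln (1 - p) * (real r)^2 / 2 - ln (1 - p) * real t / 2
              + lam * (real r)^3 / (D * real t) + K * (real r)^3 / (D^2 * real t))"
    using S1 S2 S3 PI0 by (intro mult_mono) auto
  also have "\<dots> = exp (real t * ln 2) * exp (- m * real t * (real t - real r)) * exp (real t * ln (real t))
      * exp (ln (1 - p) * (real r)^2 / 2 - ln (1 - p) * real t / 2
              + lam * (real r)^3 / (D * real t) + K * (real r)^3 / (D^2 * real t))"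
    by (simp add: exp_of_nat_mult)
  also have "\<dots> = exp (real t * ln 2 + (- m * real t * (real t - real r)) + real t * ln (real t)
      + (ln (1 - p) * (real r)^2 / 2 - ln (1 - p) * real t / 2
              + lam * (real r)^3 / (D * real t) + K * (real r)^3 / (D^2 * real t)))"
    by (simp only: exp_add)
  also have "\<dots> \<le> exp (real t * ln 2 + (- \<alpha> * (real t)^2) - ln (1 - p) * real t / 2 + real t * ln (real t))"
    by (simp only: exp_le_cancel_iff) (use S5 in linarith)
  also have "\<dots> = exp (- \<alpha> * (real t)^2 + (ln 2 - ln (1 - p) / 2) * real t + real t * ln (real t))"
    by (simp add: algebra_simps)
  finally show ?thesis .
qed

lemma card_image_r:
  assumes r: "r \<le> M"
  shows "card {v \<in> PiE {..<t} (\<lambda>_. {..<M::nat}). card (v ` {..<t}) = r} \<le> M ^ r * r ^ t"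
proof -
  let ?SS = "{S. S \<subseteq> {..<M} \<and> card S = r}"
  have fin: "finite ?SS" by (rule finite_subset[of _ "Pow {..<M}"]) auto
  have sub: "{v \<in> PiE {..<t} (\<lambda>_. {..<M::nat}). card (v ` {..<t}) = r} \<subseteq> (\<Union>S\<in>?SS. PiE {..<t} (\<lambda>_. S))"
  proof
    fix v assume v: "v \<in> {v \<in> PiE {..<t} (\<lambda>_. {..<M::nat}). card (v ` {..<t}) = r}"
    then have "v ` {..<t} \<in> ?SS" by (auto simp: PiE_iff)
    moreover have "v \<in> PiE {..<t} (\<lambda>_. v ` {..<t})" using v by (auto simp: PiE_iff)
    ultimately show "v \<in> (\<Union>S\<in>?SS. PiE {..<t} (\<lambda>_. S))" by blast
  qed
  have "card {v \<in> PiE {..<t} (\<lambda>_. {..<M::nat}). card (v ` {..<t}) = r} \<le> card (\<Union>S\<in>?SS. PiE {..<t} (\<lambda>_. S))"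
    by (rule card_mono[OF _ sub]) (use fin in \<open>auto intro!: finite_PiE finite_subset[of _ "{..<M}"]\<close>)
  also have "\<dots> \<le> (\<Sum>S\<in>?SS. card (PiE {..<t} (\<lambda>_. S)))" by (rule card_UN_le[OF fin])
  also have "\<dots> = (\<Sum>S\<in>?SS. r ^ t)" by (intro sum.cong refl) (simp add: card_PiE)
  also have "\<dots> = (M choose r) * r ^ t" using n_subsets[of "{..<M}" r] by simp
  also have "\<dots> \<le> M ^ r * r ^ t" by (intro mult_right_mono binomial_le_pow r) simp
  finally show ?thesis .
qed

lemma sum_bound:
  fixes f :: "nat \<Rightarrow> real" and E :: real
  assumes t: "t \<ge> 1" and M: "M \<ge> 1"
    and f0: "\<And>r. 1 \<le> r \<Longrightarrow> r \<le> t \<Longrightarrow> f r \<ge> 0"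
    and fE: "\<And>r. 1 \<le> r \<Longrightarrow> r \<le> t \<Longrightarrow> r \<le> M \<Longrightarrow> real M ^ r * real r ^ t / real M ^ t * f r \<le> E"
  shows "(\<Sum>v\<in>PiE {..<t} (\<lambda>_. {..<M}). f (card (v ` {..<t}))) / real M ^ t \<le> real t * E"
proof -
  let ?VV = "PiE {..<t} (\<lambda>_. {..<M})"
  let ?c = "\<lambda>v. card (v ` {..<t})"
  have finV: "finite ?VV" by (simp add: finite_PiE)
  have crange: "?c v \<in> {1..min t M}" if "v \<in> ?VV" for v
  proof -
    have "0 \<in> {..<t}" using t by simp
    then have "v ` {..<t} \<noteq> {}" by blast
    then have "?c v \<ge> 1" by (simp add: Suc_le_eq card_gt_0_iff)
    moreover have "?c v \<le> t" using card_image_le[of "{..<t}" v] by simp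
    moreover have "v ` {..<t} \<subseteq> {..<M}" using that by (auto simp: PiE_iff)
    then have "?c v \<le> M" using card_mono[of "{..<M}" "v ` {..<t}"] by simp
    ultimately show ?thesis by simp
  qed
  have "(\<Sum>v\<in>?VV. f (?c v)) = (\<Sum>r\<in>{1..min t M}. \<Sum>v\<in>{v\<in>?VV. ?c v = r}. f (?c v))"
    by (rule sum.group[symmetric]) (use finV crange in auto)
  also have "\<dots> = (\<Sum>r\<in>{1..min t M}. real (card {v\<in>?VV. ?c v = r}) * f r)"
    by (intro sum.cong refl) simp
  also have "\<dots> \<le> (\<Sum>r\<in>{1..min t M}. real (M ^ r * r ^ t) * f r)"
  proof (intro sum_mono mult_right_mono)
    fix r assume r: "r \<in> {1..min t M}"
    then have "card {v\<in>?VV. ?c v = r} \<le> M ^ r * r ^ t" using card_image_r[of r M t] by auto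
    then show "real (card {v\<in>?VV. ?c v = r}) \<le> real (M ^ r * r ^ t)" by (simp only: of_nat_le_iff)
    show "0 \<le> f r" using r f0 by auto
  qed
  finally have S: "(\<Sum>v\<in>?VV. f (?c v)) / real M ^ t \<le> (\<Sum>r\<in>{1..min t M}. real (M ^ r * r ^ t) * f r) / real M ^ t"
    using M by (intro divide_right_mono) auto
  also have "\<dots> = (\<Sum>r\<in>{1..min t M}. real M ^ r * real r ^ t / real M ^ t * f r)"
    by (simp add: sum_divide_distrib)
  also have "\<dots> \<le> (\<Sum>r\<in>{1..min t M}. E)"
    by (intro sum_mono fE) auto
  also have "\<dots> = real (min t M) * E" by simp
  also have "\<dots> \<le> real t * E"
  proof -
    have "0 \<le> real M ^ 1 * real 1 ^ t / real M ^ t * f 1" using f0[of 1] t by simp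
    also have "\<dots> \<le> E" using fE[of 1] t M by simp
    finally have "E \<ge> 0" .
    then show ?thesis by (intro mult_right_mono) auto
  qed
  finally show ?thesis .
qed

lemma prob_clique_1: "d \<ge> 1 \<Longrightarrow> prob_clique 1 d p = 1"
proof -
  assume d: "d \<ge> 1"
  interpret P: prob_space "points_measure 1 d" by (rule prob_points[OF d])
  have "{U \<in> space (points_measure 1 d). \<forall>i<1. \<forall>j<1. i \<noteq> j \<longrightarrow> adj d p U i j} = space (points_measure 1 d)"
    by auto
  then have "prob_clique 1 d p = measure (points_measure 1 d) (space (points_measure 1 d))"
    unfolding prob_clique_def by (simp only:)
  then show ?thesis using P.prob_space by (simp only:)
qed

lemma tuple_M0: "t \<ge> 1 \<Longrightarrow> prob_indep_tuple 0 d p t = 0"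
proof -
  assume t: "t \<ge> 1"
  have "space (vertices_measure 0 t) = {}"
  proof -
    have "0 \<in> {..<t}" using t by simp
    then show ?thesis by (auto simp: space_vert PiE_iff)
  qed
  then have "space (points_measure 0 d \<Otimes>\<^sub>M vertices_measure 0 t) = {}"
    by (simp add: space_pair_measure)
  then show ?thesis unfolding prob_indep_tuple_def by simp
qed

lemma c_st_le_1: "t \<ge> 2 \<Longrightarrow> c_st t t \<le> 1"
proof -
  assume t: "t \<ge> 2"
  let ?E = "\<lambda>i j::nat. False"
  have fg: "finite_graph 1 ?E" by (simp add: finite_graph_def)
  have kf: "graph_Kt_free 1 ?E t"
  proof -
    have "card S \<le> 1" if "S \<subseteq> {..<1::nat}" for S
      using card_mono[OF _ that] by simp
    then show ?thesis unfolding graph_Kt_free_def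
    proof (intro notI, elim exE conjE)
      fix S :: "nat set" assume h: "\<And>S. S \<subseteq> {..<1::nat} \<Longrightarrow> card S \<le> 1" and S: "S \<subseteq> {..<1}" "card S = t"
      then show False using h[OF S(1)] t by simp
    qed
  qed
  have gip: "graph_indep_prob 1 ?E t = 1"
    unfolding graph_indep_prob_def by (simp add: card_PiE)
  have bdd: "bdd_below {graph_indep_prob n E t | n E. finite_graph n E \<and> graph_Kt_free n E t}"
    by (rule bdd_belowI[of _ 0]) (auto simp: graph_indep_prob_def)
  have "c_st t t \<le> graph_indep_prob 1 ?E t"
    unfolding c_st_def by (rule cInf_lower[OF _ bdd]) (use fg kf in blast)
  then show ?thesis using gip by simp
qed

lemma c_st_le_gip:
  assumes M: "M \<ge> 1" and U: "Kt_free M d p t U"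
  shows "c_st t t \<le> graph_indep_prob M (Egr M d p U) t"
proof -
  have fg: "finite_graph M (Egr M d p U)"
    using M by (auto simp: finite_graph_def Egr_def adj_def ip_def mult.commute)
  have kf: "graph_Kt_free M (Egr M d p U) t"
    using U unfolding graph_Kt_free_def Kt_free_def Egr_def by blast
  have bdd: "bdd_below {graph_indep_prob n E t | n E. finite_graph n E \<and> graph_Kt_free n E t}"
    by (rule bdd_belowI[of _ 0]) (auto simp: graph_indep_prob_def)
  show ?thesis
    unfolding c_st_def by (rule cInf_lower[OF _ bdd]) (use fg kf in blast)
qed

theorem theorem2p3:
  fixes p \<delta> D0 K D :: real
  assumes p_pos: "0 < p" and p_half: "p < 1/2"
    and delta_pos: "\<delta> > 0"
    and D0_pos: "D0 > 0"
    and bounds: "\<forall>t::nat. t \<ge> 2 \<longrightarrow> (\<forall>D'::real. D' \<ge> D0 \<longrightarrow> (\<forall>d::nat. real d = D'^2 * (real t)^2 \<longrightarrow>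
        (\<forall>r::nat. 1 \<le> r \<and> r \<le> t \<longrightarrow>
          prob_clique r d p \<le> p ^ (r choose 2) *
            exp (- (a_p p ^ 3 / (p ^ 3 * sqrt (real d))) * real (r choose 3)
                 + K * real r ^ 3 / (D' * sqrt (real d)))
        \<and> prob_indep r d p \<le> (1 - p) ^ (r choose 2) *
            exp ((a_p p ^ 3 / ((1 - p) ^ 3 * sqrt (real d))) * real (r choose 3)
                 + K * real r ^ 3 / (D' * sqrt (real d))))))"
    and D_ge: "D \<ge> D0"
    and D_sq: "D^2 \<in> \<nat>"
  defines "d \<equiv> (\<lambda>t::nat. nat \<lfloor>D^2 * (real t)^2\<rfloor>)"
    and "kap \<equiv> a_p p ^ 3 / (6 * p ^ 3)"
    and "lam \<equiv> a_p p ^ 3 / (6 * (1 - p) ^ 3)"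
  defines "m \<equiv> - ln p / 2 + kap / D - K / D^2 - \<delta>"
  defines "M \<equiv> (\<lambda>t::nat. nat \<lfloor>exp (m * real t)\<rfloor>)"
    and "\<alpha> \<equiv> Inf ((\<lambda>\<theta>::real. (1 - \<theta>) * (- ln p / 2 + kap / D) - \<theta>^2 / 2 * ln (1 - p)
                 - lam / D * \<theta>^3 - (2 - \<theta>) * K / D^2) ` {0..1}) - \<delta>"
  shows "((\<lambda>t. prob_Kt_free (M t) (d t) p t) \<longlongrightarrow> 1) sequentially
    \<and> (\<exists>f :: nat \<Rightarrow> real. f \<in> o(\<lambda>t. (real t)^2) \<and>
         (\<forall>\<^sub>F t in sequentially.
            prob_indep_tuple (M t) (d t) p t \<le> exp (- \<alpha> * (real t)^2 + f t)))
    \<and> (\<exists>g :: nat \<Rightarrow> real. g \<in> o(\<lambda>t. (real t)^2) \<and>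
         (\<forall>\<^sub>F t in sequentially. c_st t t \<le> exp (- \<alpha> * (real t)^2 + g t)))"
proof -
  have D: "D > 0" using D_ge D0_pos by linarith
  obtain n :: nat where n: "D^2 = real n" using D_sq by (auto elim: Nats_cases)
  have dt: "real (d t) = D^2 * (real t)^2" for t
  proof -
    have "\<lfloor>real n * (real t)^2\<rfloor> = int (n * t^2)"
      by (metis floor_of_nat of_nat_mult of_nat_power)
    then have "d t = nat (int (n * t^2))" unfolding d_def n by (simp only:)
    then have "d t = n * t^2" by (simp only: nat_int)
    then show ?thesis using n by simp
  qed
  have sqd: "sqrt (real (d t)) = D * real t" for t
  proof -
    have "real (d t) = (D * real t)^2" using dt by (simp add: power_mult_distrib)
    then show ?thesis using D by simp
  qed
  have d1: "d t \<ge> 1" if "t \<ge> 1" for t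
  proof -
    have "real (d t) > 0" using dt D that by simp
    then show ?thesis by simp
  qed
  have HC: "prob_clique r (d t) p \<le> p ^ (r choose 2) *
            exp (- (a_p p ^ 3 / (p ^ 3 * (D * real t))) * real (r choose 3)
                 + K * real r ^ 3 / (D * (D * real t)))"
    if "t \<ge> 2" "1 \<le> r" "r \<le> t" for t r
    using bounds[rule_format, of t D "d t" r] that D_ge dt sqd by simp
  have HI: "prob_indep r (d t) p \<le> (1 - p) ^ (r choose 2) *
            exp ((a_p p ^ 3 / ((1 - p) ^ 3 * (D * real t))) * real (r choose 3)
                 + K * real r ^ 3 / (D * (D * real t)))"
    if "t \<ge> 2" "1 \<le> r" "r \<le> t" for t r
    using bounds[rule_format, of t D "d t" r] that D_ge dt sqd by simp
  have K0: "K \<ge> 0"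
  proof -
    have c: "Suc 0 choose 2 = 0" "Suc 0 choose 3 = 0" by (simp_all add: binomial_eq_0)
    have "1 \<le> exp (K * 1 / (D * (D * 2)))"
      using HC[of 2 1] prob_clique_1[OF d1[of 2]] by (simp add: c)
    then have "K * 1 / (D * (D * 2)) \<ge> 0" by simp
    moreover have "D * (D * 2) > 0" using D by simp
    ultimately show ?thesis by (simp add: zero_le_divide_iff)
  qed
  have a0: "a_p p \<ge> 0" unfolding a_p_def by simp

  have Mle: "real (M t) \<le> exp (m * real t)" for t
  proof -
    have "\<lfloor>exp (m * real t)\<rfloor> \<ge> 0" by simp
    then have "real (M t) = real_of_int \<lfloor>exp (m * real t)\<rfloor>" unfolding M_def by simp
    also have "\<dots> \<le> exp (m * real t)" by (rule of_int_floor_le)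
    finally show ?thesis .
  qed
  have Mge: "real (M t) > exp (m * real t) - 1" for t
  proof -
    have "\<lfloor>exp (m * real t)\<rfloor> \<ge> 0" by simp
    then have "real (M t) = real_of_int \<lfloor>exp (m * real t)\<rfloor>" unfolding M_def by simp
    then show ?thesis by linarith
  qed
  define c0 where "c0 = - ln p / 2 + 3 * kap / D"
  have C1b: "1 - exp (- \<delta> * (real t)^2 + c0 * real t) \<le> prob_Kt_free (M t) (d t) p t" if t: "t \<ge> 2" for t
  proof -
    have "real (M t choose t) * prob_clique t (d t) p \<le> exp (- \<delta> * (real t)^2 + c0 * real t)"
      unfolding c0_def
      by (rule R1[where a="a_p p" and kap=kap and m=m and K=K])
         (use t p_pos p_half D a0 Mle HC[of t t] in \<open>auto simp: kap_def m_def\<close>)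
    then show ?thesis using free_bound(1)[where d="d t" and M="M t" and t=t and p=p] d1[of t] t by simp
  qed
  have C1u: "prob_Kt_free (M t) (d t) p t \<le> 1" if t: "t \<ge> 2" for t
    using free_bound(2)[where d="d t" and M="M t" and t=t and p=p] d1[of t] t by simp
  have lim0: "((\<lambda>t::nat. exp (- \<delta> * (real t)^2 + c0 * real t)) \<longlongrightarrow> 0) sequentially"
    using delta_pos by real_asymp
  have C1: "((\<lambda>t. prob_Kt_free (M t) (d t) p t) \<longlongrightarrow> 1) sequentially"
  proof (rule tendsto_sandwich[of "\<lambda>t. 1 - exp (- \<delta> * (real t)^2 + c0 * real t)" _ _ "\<lambda>_. 1"])
    show "\<forall>\<^sub>F t in sequentially. 1 - exp (- \<delta> * (real t)^2 + c0 * real t) \<le> prob_Kt_free (M t) (d t) p t"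
      using eventually_ge_at_top[of 2] by eventually_elim (rule C1b)
    show "\<forall>\<^sub>F t in sequentially. prob_Kt_free (M t) (d t) p t \<le> 1"
      using eventually_ge_at_top[of 2] by eventually_elim (rule C1u)
    have "((\<lambda>t::nat. 1 - exp (- \<delta> * (real t)^2 + c0 * real t)) \<longlongrightarrow> 1 - 0) sequentially"
      by (intro tendsto_intros lim0)
    then show "((\<lambda>t::nat. 1 - exp (- \<delta> * (real t)^2 + c0 * real t)) \<longlongrightarrow> 1) sequentially" by simp
  qed simp
  define A where "A = - ln p / 2 + kap / D"
  define G where "G = (\<lambda>\<theta>::real. (1 - \<theta>) * (- ln p / 2 + kap / D) - \<theta>^2 / 2 * ln (1 - p)
                 - lam / D * \<theta>^3 - (2 - \<theta>) * K / D^2)"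
  have alpha_eq: "\<alpha> = Inf (G ` {0..1}) - \<delta>" unfolding \<alpha>_def G_def ..
  have bddG: "bdd_below (G ` {0..1})" unfolding G_def
    by (intro bounded_imp_bdd_below compact_imp_bounded compact_continuous_image continuous_intros) (use D in auto)
  have alG: "\<alpha> \<le> G \<theta> - \<delta>" if "\<theta> \<in> {0..1}" for \<theta>
    using cInf_lower[OF imageI[OF that] bddG] alpha_eq by simp
  define c1 where "c1 = ln 2 - ln (1 - p) / 2"
  define f where "f = (\<lambda>t::nat. ln (real t) + c1 * real t + real t * ln (real t))"
  have fo: "f \<in> o(\<lambda>t. (real t)^2)" unfolding f_def by real_asymp
  have Mbig: "\<forall>\<^sub>F t in sequentially. m \<le> 0 \<or> exp (m * real t) \<le> 2 * real (M t)"
  proof (cases "m \<le> 0")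
    case True then show ?thesis by simp
  next
    case False
    show ?thesis using eventually_ge_at_top[of "nat \<lceil>1 / m\<rceil>"]
    proof eventually_elim
      case (elim t)
      then have "real t \<ge> 1 / m" by linarith
      then have "m * real t \<ge> 1" using False by (simp add: field_simps)
      then have "exp (m * real t) \<ge> 2" using exp_ge_add_one_self[of "m * real t"] by linarith
      then show ?case using Mge[of t] by linarith
    qed
  qed
  have key: "\<forall>\<^sub>F t in sequentially. t \<ge> 2 \<and> (M t \<ge> 1 \<longrightarrow>
      (\<Sum>v\<in>PiE {..<t} (\<lambda>_. {..<M t}). prob_indep (card (v ` {..<t})) (d t) p) / real (M t) ^ t
        \<le> exp (- \<alpha> * (real t)^2 + f t))"
    using Mbig eventually_ge_at_top[of 2]
  proof eventually_elim
    case (elim t)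
    then have t: "t \<ge> 2" and mb: "m \<le> 0 \<or> exp (m * real t) \<le> 2 * real (M t)" by auto
    have "(\<Sum>v\<in>PiE {..<t} (\<lambda>_. {..<M t}). prob_indep (card (v ` {..<t})) (d t) p) / real (M t) ^ t
        \<le> exp (- \<alpha> * (real t)^2 + f t)" if M1: "M t \<ge> 1"
    proof -
      have "(\<Sum>v\<in>PiE {..<t} (\<lambda>_. {..<M t}). prob_indep (card (v ` {..<t})) (d t) p) / real (M t) ^ t
          \<le> real t * exp (- \<alpha> * (real t)^2 + (ln 2 - ln (1 - p) / 2) * real t + real t * ln (real t))"
      proof (rule sum_bound[where f="\<lambda>r. prob_indep r (d t) p"])
        show "1 \<le> t" using t by simp
        show "1 \<le> M t" by (rule M1)
        show "0 \<le> prob_indep r (d t) p" for r unfolding prob_indep_def by simp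
        fix r assume r: "1 \<le> r" "r \<le> t" "r \<le> M t"
        have th: "real r / real t \<in> {0..1}" using r by (auto simp: divide_simps)
        show "real (M t) ^ r * real r ^ t / real (M t) ^ t * prob_indep r (d t) p
            \<le> exp (- \<alpha> * (real t)^2 + (ln 2 - ln (1 - p) / 2) * real t + real t * ln (real t))"
          by (rule R2[where a="a_p p" and lam=lam and m=m and A=A and K=K and \<delta>=\<delta> and D=D])
             (use p_pos p_half D K0 delta_pos r a0 M1 mb HI[of t r] t alG[OF th] in
               \<open>auto simp: lam_def m_def A_def G_def prob_indep_def\<close>)
      qed
      also have "\<dots> = exp (- \<alpha> * (real t)^2 + f t)"
      proof -
        have e: "- \<alpha> * (real t)^2 + f t = ln (real t) + (- \<alpha> * (real t)^2 + (ln 2 - ln (1 - p) / 2) * real t + real t * ln (real t))"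
          by (simp add: f_def c1_def algebra_simps)
        have "exp (ln (real t)) = real t" using t by simp
        then show ?thesis unfolding e exp_add by simp
      qed
      finally show ?thesis .
    qed
    then show ?case using t by simp
  qed
  have C2: "\<forall>\<^sub>F t in sequentially. prob_indep_tuple (M t) (d t) p t \<le> exp (- \<alpha> * (real t)^2 + f t)"
    using key
  proof eventually_elim
    case (elim t)
    then have t: "t \<ge> 2" by simp
    show ?case
    proof (cases "M t = 0")
      case True then show ?thesis using tuple_M0[of t "d t" p] t by simp
    next
      case False
      then have M1: "M t \<ge> 1" by simp
      show ?thesis using tuple_bound[where d="d t" and M="M t" and t=t and p=p] d1[of t] elim M1 t by simp
    qed
  qed
  have pf_ev: "\<forall>\<^sub>F t in sequentially. prob_Kt_free (M t) (d t) p t > 1/2"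
    using order_tendstoD(1)[OF C1, of "1/2"] by simp
  have C3: "\<forall>\<^sub>F t in sequentially. c_st t t \<le> exp (- \<alpha> * (real t)^2 + (f t + ln 4))"
    using key pf_ev
  proof eventually_elim
    case (elim t)
    then have t: "t \<ge> 2" and pf: "prob_Kt_free (M t) (d t) p t > 1/2" by auto
    show ?case
    proof (cases "M t = 0")
      case True
      then have "exp (m * real t) < 1" using Mge[of t] by simp
      then have "m * real t < 0" by simp
      then have m0: "m < 0" using t by (simp add: mult_less_0_iff)
      have "\<alpha> \<le> G 0 - \<delta>" by (rule alG) simp
      also have "\<dots> = m - K / D^2" by (simp add: G_def m_def algebra_simps)
      also have "\<dots> \<le> 0"
      proof -
        have "K / D^2 \<ge> 0" using K0 D by simp
        then show ?thesis using m0 by linarith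
      qed
      finally have a0': "\<alpha> \<le> 0" .
      have "c1 > 0"
      proof -
        have "ln (1 - p) < 0" using p_pos p_half by simp
        moreover have "ln (2::real) > 0" by simp
        ultimately show ?thesis unfolding c1_def by linarith
      qed
      moreover have "ln (real t) \<ge> 0" using t by simp
      ultimately have "f t \<ge> 0" unfolding f_def by simp
      moreover have "- \<alpha> * (real t)^2 \<ge> 0" using a0' by (simp add: mult_nonpos_nonneg)
      moreover have "ln (4::real) \<ge> 0" by simp
      ultimately have "0 \<le> - \<alpha> * (real t)^2 + (f t + ln 4)" by linarith
      then have "1 \<le> exp (- \<alpha> * (real t)^2 + (f t + ln 4))" by (simp only: one_le_exp_iff)
      then show ?thesis using c_st_le_1[OF t] by linarith
    next
      case False
      then have M1: "M t \<ge> 1" by simp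
      let ?B = "exp (- \<alpha> * (real t)^2 + f t)"
      have Q: "(\<Sum>v\<in>PiE {..<t} (\<lambda>_. {..<M t}). prob_indep (card (v ` {..<t})) (d t) p) / real (M t) ^ t \<le> ?B"
        using elim M1 by simp
      obtain U where U: "U \<in> space (points_measure (M t) (d t))" "Kt_free (M t) (d t) p t U"
        and Ub: "prob_Kt_free (M t) (d t) p t * graph_indep_prob (M t) (Egr (M t) (d t) p U) t \<le> 2 * ?B"
        using avg[where d="d t" and M="M t" and t=t and p=p, OF _ M1 _ Q] d1[of t] pf t by force
      have g0: "graph_indep_prob (M t) (Egr (M t) (d t) p U) t \<ge> 0"
        unfolding graph_indep_prob_def by simp
      have "graph_indep_prob (M t) (Egr (M t) (d t) p U) t / 2 \<le> prob_Kt_free (M t) (d t) p t * graph_indep_prob (M t) (Egr (M t) (d t) p U) t"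
      proof -
        have "1/2 * graph_indep_prob (M t) (Egr (M t) (d t) p U) t \<le> prob_Kt_free (M t) (d t) p t * graph_indep_prob (M t) (Egr (M t) (d t) p U) t"
          by (rule mult_right_mono) (use pf g0 in auto)
        then show ?thesis by simp
      qed
      then have "graph_indep_prob (M t) (Egr (M t) (d t) p U) t \<le> 4 * ?B" using Ub by simp
      also have "4 * ?B = exp (- \<alpha> * (real t)^2 + (f t + ln 4))"
      proof -
        have "exp (- \<alpha> * (real t)^2 + (f t + ln 4)) = exp (- \<alpha> * (real t)^2 + f t) * exp (ln 4)"
          by (simp only: exp_add[symmetric] add.assoc)
        then show ?thesis by simp
      qed
      finally show ?thesis using c_st_le_gip[OF M1 U(2)] by linarith
    qed
  qed
  have fo4: "(\<lambda>t. f t + ln 4) \<in> o(\<lambda>t. (real t)^2)" unfolding f_def by real_asymp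
  show ?thesis using C1 C2 C3 fo fo4 by blast
qed

end
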